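(* Let $\|z\|\le1$ be fixed (independent of $W_0$), let $\epsilon>0$ with $\epsilon\le1/(dm)$, where $m\ge\ln(edm)$, and let $\delta\in(0,1)$. Then with probability at least $1-\delta$, \[ \sup_{\|x-z\|\le\epsilon,\ \|x\|\le1}\|\nabla f(x;W_0)-\nabla f(z;W_0)\|^2\le113\rho^2\sqrt{\frac{\ln(edm/\delta)}{m}}. \]
   Context: Network: width $m$, temperature $\rho>0$, $a_1,\dots,a_m\in\{\pm1\}$ (uniform random signs), $W_0\in\mathbb{R}^{m\times d}$ with i.i.d. $\mathcal N(0,1)$ entries. For $W$ with rows $w_j^\top$, $\nabla f(x;W)=\frac{\rho}{\sqrt m}\sum_{j=1}^ma_j\mathbf 1[w_j^\top x\ge0]e_jx^\top$. $\|\cdot\|$ is the Frobenius (Euclidean) norm. Probability is over $W_0$ (and $a$). *)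

theory Defs
  imports "HOL-Probability.Probability"
begin

definition gauss_vec :: "(real ^ 'd) measure" where
  "gauss_vec = density lborel (\<lambda>x. ennreal (\<Prod>i\<in>UNIV. std_normal_density (x $ i)))"

definition sign_measure :: "real measure" where
  "sign_measure = measure_pmf (pmf_of_set {-1, 1})"

definition init_measure :: "nat \<Rightarrow> ((nat \<Rightarrow> real ^ 'd) \<times> (nat \<Rightarrow> real)) measure" where
  "init_measure m = (PiM {..<m} (\<lambda>_. gauss_vec)) \<Otimes>\<^sub>M (PiM {..<m} (\<lambda>_. sign_measure))"

text \<open>Row j of the m x d matrix grad f(x;W) = rho/sqrt m * sum_j a_j 1[w_j.x >= 0] e_j x^T.\<close>
definition grad_row :: "real \<Rightarrow> nat \<Rightarrow> (nat \<Rightarrow> real) \<Rightarrow> (nat \<Rightarrow> real ^ 'd) \<Rightarrow> real ^ 'd \<Rightarrow> nat \<Rightarrow> real ^ 'd" where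
  "grad_row \<rho> m a W x j = (\<rho> / sqrt m * a j * (if W j \<bullet> x \<ge> 0 then 1 else 0)) *\<^sub>R x"

definition grad_diff_sq :: "real \<Rightarrow> nat \<Rightarrow> (nat \<Rightarrow> real) \<Rightarrow> (nat \<Rightarrow> real ^ 'd) \<Rightarrow> real ^ 'd \<Rightarrow> real ^ 'd \<Rightarrow> real" where
  "grad_diff_sq \<rho> m a W x z = (\<Sum>j<m. (norm (grad_row \<rho> m a W x j - grad_row \<rho> m a W z j))\<^sup>2)"

end

theory Submission
  imports Defs
begin


abbreviation "Tm \<equiv> (\<lambda>f::real^'d \<Rightarrow> real. \<Sum>b\<in>Basis. f b *\<^sub>R b)"

lemma Tm_inner: "(b::real^'d) \<in> Basis \<Longrightarrow> Tm f \<bullet> b = f b"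
  by (simp add: inner_sum_left inner_Basis if_distrib sum.delta cong: if_cong)

lemma prod_cart_Basis:
  fixes g :: "real \<Rightarrow> real" and x :: "real^'d"
  shows "(\<Prod>i\<in>UNIV. g (x $ i)) = (\<Prod>b\<in>Basis. g (x \<bullet> b))"
proof -
  have B: "(Basis :: (real^'d) set) = (\<lambda>i. axis i 1) ` UNIV"
    by (auto simp: Basis_vec_def)
  have inj: "inj (\<lambda>i::'d. axis i (1::real))" by (auto simp: inj_def axis_eq_axis)
  show ?thesis unfolding B
    by (subst prod.reindex[OF inj]) (simp add: cart_eq_inner_axis)
qed

lemma gauss_nn:
  assumes g[measurable]: "g \<in> borel_measurable (borel :: (real^'d) measure)"
  shows "integral\<^sup>N (gauss_vec :: (real^'d) measure) g =
    (\<integral>\<^sup>+ f. ennreal (\<Prod>b\<in>Basis. std_normal_density (f b)) * g (Tm f) \<partial>(\<Pi>\<^sub>M b\<in>(Basis::(real^'d) set). lborel))"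
proof -
  have "integral\<^sup>N (gauss_vec :: (real^'d) measure) g =
     (\<integral>\<^sup>+ x. ennreal (\<Prod>b\<in>Basis. std_normal_density (x \<bullet> b)) * g x \<partial>lborel)"
    unfolding gauss_vec_def
    by (subst nn_integral_density) (auto simp: prod_cart_Basis)
  also have "\<dots> = (\<integral>\<^sup>+ x. ennreal (\<Prod>b\<in>Basis. std_normal_density (x \<bullet> b)) * g x
      \<partial>distr (\<Pi>\<^sub>M b\<in>(Basis::(real^'d) set). lborel) borel Tm)"
    by (subst lborel_eq[symmetric]) simp
  also have "\<dots> = (\<integral>\<^sup>+ f. ennreal (\<Prod>b\<in>Basis. std_normal_density (Tm f \<bullet> b)) * g (Tm f)
      \<partial>(\<Pi>\<^sub>M b\<in>(Basis::(real^'d) set). lborel))"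
    by (subst nn_integral_distr) auto
  also have "\<dots> = (\<integral>\<^sup>+ f. ennreal (\<Prod>b\<in>Basis. std_normal_density (f b)) * g (Tm f)
      \<partial>(\<Pi>\<^sub>M b\<in>(Basis::(real^'d) set). lborel))"
    by (intro nn_integral_cong) (simp add: Tm_inner cong: prod.cong)
  finally show ?thesis .
qed

interpretation lbps: product_sigma_finite "\<lambda>_::real^'d. lborel :: real measure"
  by unfold_locales

lemma std_int1: "(\<integral>\<^sup>+ y. ennreal (std_normal_density y) \<partial>lborel) = 1"
proof -
  interpret prob_space "density lborel std_normal_density"
    by (rule prob_space_normal_density) simp
  show ?thesis using emeasure_space_1 by (simp add: emeasure_density)
qed

lemma std_int2: "(\<integral>\<^sup>+ y. ennreal (std_normal_density y) * ennreal (y\<^sup>2) \<partial>lborel) = 1"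
proof -
  have "(\<integral>\<^sup>+ y. ennreal (std_normal_density y * y ^ (2*1)) \<partial>lborel) = ennreal (fact (2 * 1) / (2^1 * fact 1))"
    using std_normal_moment_even[of 1]
    by (subst nn_integral_eq_integral) (auto simp: has_bochner_integral_iff)
  hence "(\<integral>\<^sup>+ y. ennreal (std_normal_density y * y ^ (2*1)) \<partial>lborel) = ennreal 1"
    by simp
  thus ?thesis by (simp add: ennreal_mult'' power2_eq_square)
qed

lemma gauss_prod:
  assumes [measurable]: "\<And>b. b \<in> Basis \<Longrightarrow> h b \<in> borel_measurable borel"
  shows "(\<integral>\<^sup>+ f. ennreal (\<Prod>b\<in>Basis. std_normal_density (f b)) * (\<Prod>b\<in>Basis. h b (f b))
      \<partial>(\<Pi>\<^sub>M b\<in>(Basis::(real^'d) set). lborel)) =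
     (\<Prod>b\<in>Basis. \<integral>\<^sup>+ y. ennreal (std_normal_density y) * h b y \<partial>lborel)"
proof -
  have "(\<integral>\<^sup>+ f. ennreal (\<Prod>b\<in>Basis. std_normal_density (f b)) * (\<Prod>b\<in>Basis. h b (f b))
      \<partial>(\<Pi>\<^sub>M b\<in>(Basis::(real^'d) set). lborel)) =
    (\<integral>\<^sup>+ f. (\<Prod>b\<in>Basis. ennreal (std_normal_density (f b)) * h b (f b))
      \<partial>(\<Pi>\<^sub>M b\<in>(Basis::(real^'d) set). lborel))"
    by (intro nn_integral_cong) (simp add: prod_ennreal[symmetric] prod.distrib)
  also have "\<dots> = (\<Prod>b\<in>Basis. \<integral>\<^sup>+ y. ennreal (std_normal_density y) * h b y \<partial>lborel)"
    by (rule lbps.product_nn_integral_prod) auto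
  finally show ?thesis .
qed

lemma gauss_space: "emeasure (gauss_vec :: (real^'d) measure) UNIV = 1"
proof -
  have "emeasure (gauss_vec :: (real^'d) measure) UNIV = integral\<^sup>N (gauss_vec :: (real^'d) measure) (\<lambda>_. 1)"
    by (simp add: gauss_vec_def)
  also have "\<dots> = (\<integral>\<^sup>+ f. ennreal (\<Prod>b\<in>Basis. std_normal_density (f b)) * (\<Prod>b\<in>(Basis::(real^'d) set). (\<lambda>_. 1) (f b))
      \<partial>(\<Pi>\<^sub>M b\<in>(Basis::(real^'d) set). lborel))"
    by (subst gauss_nn) auto
  also have "\<dots> = 1"
    by (subst gauss_prod) (auto simp: std_int1)
  finally show ?thesis .
qed

lemma std_le_half: "std_normal_density y \<le> 1/2"
proof -
  have "sqrt 4 \<le> sqrt (2*pi)" using pi_gt3 by (intro real_sqrt_le_mono) simp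
  hence s2: "2 \<le> sqrt (2*pi)" by simp
  have "exp (- y\<^sup>2 / 2) \<le> 1" by simp
  hence "(1 / sqrt (2 * pi)) * exp (- y\<^sup>2 / 2) \<le> 1 / sqrt (2*pi)"
    using s2 by (simp add: divide_le_cancel)
  also have "\<dots> \<le> 1/2" using s2 by (simp add: divide_le_cancel)
  finally show ?thesis by (simp add: std_normal_density_def)
qed

lemma anti1:
  fixes c r s :: real
  assumes "c \<noteq> 0" "s \<ge> 0"
  shows "(\<integral>\<^sup>+ y. ennreal (std_normal_density y) * indicator {y. \<bar>y*c + r\<bar> \<le> s} y \<partial>lborel) \<le> ennreal (s / \<bar>c\<bar>)"
proof -
  let ?I = "{-r/c - s/\<bar>c\<bar> .. -r/c + s/\<bar>c\<bar>}"
  have sub: "\<bar>y*c + r\<bar> \<le> s \<Longrightarrow> y \<in> ?I" for y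
  proof -
    assume h: "\<bar>y*c + r\<bar> \<le> s"
    have "y*c + r = c * (y + r/c)" using assms by (simp add: field_simps)
    hence "\<bar>c\<bar> * \<bar>y + r/c\<bar> \<le> s" using h by (simp add: abs_mult)
    hence "\<bar>y + r/c\<bar> \<le> s/\<bar>c\<bar>" using assms by (simp add: field_simps mult.commute)
    thus ?thesis by auto
  qed
  have "(\<integral>\<^sup>+ y. ennreal (std_normal_density y) * indicator {y. \<bar>y*c + r\<bar> \<le> s} y \<partial>lborel)
     \<le> (\<integral>\<^sup>+ y. ennreal (1/2) * indicator ?I y \<partial>lborel)"
  proof (intro nn_integral_mono)
    fix y
    have "ennreal (std_normal_density y) \<le> ennreal (1/2)" by (rule ennreal_leI[OF std_le_half])
    thus "ennreal (std_normal_density y) * indicator {y. \<bar>y*c + r\<bar> \<le> s} y \<le> ennreal (1/2) * indicator ?I y"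
      using sub[of y] by (auto split: split_indicator simp del: ennreal_half)
  qed
  also have "\<dots> = ennreal (1/2) * emeasure lborel ?I" by (simp add: nn_integral_cmult_indicator)
  also have "\<dots> = ennreal (1/2) * ennreal (2 * s / \<bar>c\<bar>)" using assms by (simp del: ennreal_half)
  also have "\<dots> = ennreal (1/2 * (2 * s / \<bar>c\<bar>))" using assms by (subst ennreal_mult) auto
  also have "\<dots> = ennreal (s / \<bar>c\<bar>)" by simp
  finally show ?thesis .
qed

lemma gauss_sq:
  assumes b0: "(b0::real^'d) \<in> Basis"
  shows "(\<integral>\<^sup>+ w. ennreal ((w \<bullet> b0)\<^sup>2) \<partial>(gauss_vec :: (real^'d) measure)) = 1"
proof -
  have "(\<integral>\<^sup>+ w. ennreal ((w \<bullet> b0)\<^sup>2) \<partial>(gauss_vec :: (real^'d) measure)) =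
    (\<integral>\<^sup>+ f. ennreal (\<Prod>b\<in>Basis. std_normal_density (f b)) * ennreal ((Tm f \<bullet> b0)\<^sup>2)
      \<partial>(\<Pi>\<^sub>M b\<in>(Basis::(real^'d) set). lborel))"
    by (subst gauss_nn) auto
  also have "\<dots> = (\<integral>\<^sup>+ f. ennreal (\<Prod>b\<in>Basis. std_normal_density (f b)) *
     (\<Prod>b\<in>(Basis::(real^'d) set). (\<lambda>b y. if b = b0 then ennreal (y\<^sup>2) else 1) b (f b))
      \<partial>(\<Pi>\<^sub>M b\<in>(Basis::(real^'d) set). lborel))"
    using b0 by (intro nn_integral_cong) (simp add: Tm_inner prod.delta)
  also have "\<dots> = 1"
  proof (subst gauss_prod)
    show "(\<Prod>b\<in>(Basis::(real^'d) set). \<integral>\<^sup>+ y. ennreal (std_normal_density y) * (if b = b0 then ennreal (y\<^sup>2) else 1) \<partial>lborel) = 1"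
    proof (rule prod.neutral, intro ballI)
      fix b :: "real^'d"
      show "(\<integral>\<^sup>+ y. ennreal (std_normal_density y) * (if b = b0 then ennreal (y\<^sup>2) else 1) \<partial>lborel) = 1"
        by (cases "b = b0") (simp_all add: std_int1 std_int2)
    qed
  qed auto
  finally show ?thesis .
qed

lemma Tm_inner_gen: "Tm f \<bullet> (z::real^'d) = (\<Sum>b\<in>Basis. f b * (b \<bullet> z))"
  by (simp add: inner_sum_left)

lemma gauss_anti:
  fixes z :: "real^'d"
  assumes b0: "b0 \<in> Basis" and c0: "z \<bullet> b0 \<noteq> 0" and s: "s \<ge> 0"
  shows "emeasure (gauss_vec :: (real^'d) measure) {w. \<bar>w \<bullet> z\<bar> \<le> s} \<le> ennreal (s / \<bar>z \<bullet> b0\<bar>)"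
proof -
  define B' where "B' = (Basis :: (real^'d) set) - {b0}"
  define c where "c = z \<bullet> b0"
  have BB: "(Basis :: (real^'d) set) = insert b0 B'" using b0 by (auto simp: B'_def)
  have fB': "finite B'" "b0 \<notin> B'" by (auto simp: B'_def)
  let ?S = "{w::real^'d. \<bar>w \<bullet> z\<bar> \<le> s}"
  have Sm[measurable]: "?S \<in> sets borel" by measurable
  let ?F = "\<lambda>f. ennreal (\<Prod>b\<in>Basis. std_normal_density (f b)) * indicator ?S (Tm f)"
  have "emeasure (gauss_vec :: (real^'d) measure) ?S = integral\<^sup>N (gauss_vec :: (real^'d) measure) (indicator ?S)"
    by (simp add: gauss_vec_def)
  also have "\<dots> = integral\<^sup>N (\<Pi>\<^sub>M b\<in>(Basis::(real^'d) set). lborel) ?F"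
    by (subst gauss_nn) auto
  also have "\<dots> = integral\<^sup>N (\<Pi>\<^sub>M b\<in>insert b0 B'. lborel) ?F"
    by (simp only: BB)
  also have "\<dots> = (\<integral>\<^sup>+ x. (\<integral>\<^sup>+ y. ?F (x(b0 := y)) \<partial>lborel) \<partial>(\<Pi>\<^sub>M b\<in>B'. lborel))"
    by (rule lbps.product_nn_integral_insert[OF fB']) (simp only: BB[symmetric]; measurable)
  also have "\<dots> \<le> (\<integral>\<^sup>+ x. ennreal (\<Prod>b\<in>B'. std_normal_density (x b)) * ennreal (s / \<bar>c\<bar>) \<partial>(\<Pi>\<^sub>M b\<in>B'. lborel))"
  proof (intro nn_integral_mono)
    fix x :: "real^'d \<Rightarrow> real"
    define r where "r = (\<Sum>b\<in>B'. x b * (b \<bullet> z))"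
    define P where "P = (\<Prod>b\<in>B'. std_normal_density (x b))"
    have P0: "P \<ge> 0" unfolding P_def by (simp add: prod_nonneg)
    have eq: "?F (x(b0 := y)) = ennreal P * (ennreal (std_normal_density y) * indicator {y. \<bar>y*c + r\<bar> \<le> s} y)" for y
    proof -
      have "(\<Prod>b\<in>Basis. std_normal_density ((x(b0 := y)) b)) = std_normal_density y * P"
        unfolding BB P_def using fB' by (simp add: prod.insert) (intro disjI2 prod.cong, auto)
      moreover have "Tm (x(b0 := y)) \<bullet> z = y * c + r"
      proof -
        have "Tm (x(b0 := y)) \<bullet> z = (\<Sum>b\<in>insert b0 B'. (x(b0 := y)) b * (b \<bullet> z))"
          by (subst Tm_inner_gen) (simp only: BB)
        also have "\<dots> = y * c + r"
          unfolding r_def c_def using fB'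
          by (simp add: sum.insert inner_commute) (intro sum.cong, auto)
        finally show ?thesis .
      qed
      ultimately show ?thesis using P0
        by (simp add: ennreal_mult' mult_ac split: split_indicator)
    qed
    have "(\<integral>\<^sup>+ y. ?F (x(b0 := y)) \<partial>lborel) = ennreal P * (\<integral>\<^sup>+ y. ennreal (std_normal_density y) * indicator {y. \<bar>y*c + r\<bar> \<le> s} y \<partial>lborel)"
      unfolding eq by (rule nn_integral_cmult) measurable
    also have "\<dots> \<le> ennreal P * ennreal (s / \<bar>c\<bar>)"
      using anti1[of c s r] c0 s unfolding c_def by (intro mult_left_mono) auto
    finally show "(\<integral>\<^sup>+ y. ?F (x(b0 := y)) \<partial>lborel) \<le> ennreal (\<Prod>b\<in>B'. std_normal_density (x b)) * ennreal (s / \<bar>c\<bar>)"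
      unfolding P_def .
  qed
  also have "\<dots> = (\<integral>\<^sup>+ x. (\<Prod>b\<in>B'. ennreal (std_normal_density (x b))) \<partial>(\<Pi>\<^sub>M b\<in>B'. lborel)) * ennreal (s / \<bar>c\<bar>)"
    by (subst nn_integral_multc) (auto simp: prod_ennreal)
  also have "\<dots> = ennreal (s / \<bar>c\<bar>)"
    by (subst lbps.product_nn_integral_prod) (auto simp: fB' std_int1)
  finally show ?thesis unfolding c_def .
qed

lemma space_gauss[simp]: "space (gauss_vec :: (real^'d) measure) = UNIV"
  by (simp add: gauss_vec_def)

lemma sets_gauss[simp, measurable_cong]: "sets (gauss_vec :: (real^'d) measure) = sets borel"
  by (simp add: gauss_vec_def)

lemma prob_gauss: "prob_space (gauss_vec :: (real^'d) measure)"
  by (rule prob_spaceI) (simp add: gauss_space)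

lemma norm_sq_Basis: "(norm (w::real^'d))\<^sup>2 = (\<Sum>b\<in>Basis. (w \<bullet> b)\<^sup>2)"
  unfolding power2_norm_eq_inner by (subst euclidean_inner) (simp add: power2_eq_square)

lemma gauss_norm_sq: "(\<integral>\<^sup>+ w. ennreal ((norm w)\<^sup>2) \<partial>(gauss_vec :: (real^'d) measure)) = CARD('d)"
proof -
  have "(\<integral>\<^sup>+ w. ennreal ((norm w)\<^sup>2) \<partial>(gauss_vec :: (real^'d) measure)) =
     (\<integral>\<^sup>+ w. (\<Sum>b\<in>(Basis::(real^'d) set). ennreal ((w \<bullet> b)\<^sup>2)) \<partial>(gauss_vec :: (real^'d) measure))"
    by (intro nn_integral_cong) (simp add: norm_sq_Basis) 
  also have "\<dots> = (\<Sum>b\<in>(Basis::(real^'d) set). (\<integral>\<^sup>+ w. ennreal ((w \<bullet> b)\<^sup>2) \<partial>(gauss_vec :: (real^'d) measure)))"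
    by (rule nn_integral_sum) auto
  also have "\<dots> = (\<Sum>b\<in>(Basis::(real^'d) set). 1)"
    by (intro sum.cong) (auto simp: gauss_sq)
  finally show ?thesis by simp
qed

lemma gauss_norm_tail:
  assumes "R2 > 0"
  shows "emeasure (gauss_vec :: (real^'d) measure) {w. (norm w)\<^sup>2 > R2} \<le> ennreal (CARD('d) / R2)"
proof -
  have "emeasure (gauss_vec :: (real^'d) measure) {w. (norm w)\<^sup>2 > R2} =
     (\<integral>\<^sup>+ w. indicator {w. (norm w)\<^sup>2 > R2} w \<partial>(gauss_vec :: (real^'d) measure))"
    by (subst nn_integral_indicator) auto
  also have "\<dots> \<le> (\<integral>\<^sup>+ w. ennreal (1/R2) * ennreal ((norm w)\<^sup>2) \<partial>(gauss_vec :: (real^'d) measure))"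
  proof (intro nn_integral_mono)
    fix w :: "real^'d"
    show "indicator {w. (norm w)\<^sup>2 > R2} w \<le> ennreal (1/R2) * ennreal ((norm w)\<^sup>2)"
    proof (cases "(norm w)\<^sup>2 > R2")
      case True
      hence "1 \<le> 1/R2 * (norm w)\<^sup>2" using assms by (simp add: field_simps)
      hence "ennreal 1 \<le> ennreal (1/R2 * (norm w)\<^sup>2)" by (rule ennreal_leI)
      thus ?thesis using True assms by (simp add: ennreal_mult[symmetric] del: ennreal_1)
    qed simp
  qed
  also have "\<dots> = ennreal (1/R2) * CARD('d)"
    by (subst nn_integral_cmult) (auto simp: gauss_norm_sq)
  also have "\<dots> = ennreal (CARD('d) / R2)"
    using assms by (simp add: ennreal_mult'[symmetric] ennreal_of_nat_eq_real_of_nat)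
  finally show ?thesis .
qed

lemma exists_big_coord:
  fixes z :: "real^'d"
  shows "\<exists>b0\<in>Basis. (z \<bullet> b0)\<^sup>2 * CARD('d) \<ge> (norm z)\<^sup>2"
proof (rule ccontr)
  assume "\<not> ?thesis"
  hence h: "\<And>b. b \<in> Basis \<Longrightarrow> (z \<bullet> b)\<^sup>2 < (norm z)\<^sup>2 / CARD('d)"
    by (auto simp: field_simps)
  have "(norm z)\<^sup>2 = (\<Sum>b\<in>(Basis::(real^'d) set). (z \<bullet> b)\<^sup>2)" by (rule norm_sq_Basis)
  also have "\<dots> < (\<Sum>b\<in>(Basis::(real^'d) set). (norm z)\<^sup>2 / CARD('d))"
    by (rule sum_strict_mono) (auto intro: h)
  also have "\<dots> = (norm z)\<^sup>2" by simp
  finally show False by simp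
qed



lemma key_ineq: 
  fixes q d \<epsilon> c :: real
  assumes "0 < q" "1 \<le> d" "0 \<le> \<epsilon>" "\<epsilon> * d * q * q \<le> 1" "1 \<le> c\<^sup>2 * d * q"
  shows "sqrt (d*q) * \<epsilon> \<le> \<bar>c\<bar> / q"
proof -
  have t: "(\<epsilon> * d * q * q)\<^sup>2 \<le> 1" using assms by (intro power_le_one) auto
  have eq: "(d*q*\<epsilon>\<^sup>2*q\<^sup>2) * (d*q) = (\<epsilon> * d * q * q)\<^sup>2" by (simp add: power2_eq_square algebra_simps)
  have "(d*q*\<epsilon>\<^sup>2*q\<^sup>2) * (d*q) \<le> c\<^sup>2 * (d*q)" using t eq assms(5) by (simp add: mult.assoc)
  hence le: "d*q*\<epsilon>\<^sup>2*q\<^sup>2 \<le> c\<^sup>2" using assms by (simp add: mult_le_cancel_right)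
  have "(sqrt (d*q) * \<epsilon> * q)\<^sup>2 = d*q*\<epsilon>\<^sup>2*q\<^sup>2" using assms by (simp add: power_mult_distrib)
  hence "(sqrt (d*q) * \<epsilon> * q)\<^sup>2 \<le> \<bar>c\<bar>\<^sup>2" using le by simp
  hence "sqrt (d*q) * \<epsilon> * q \<le> \<bar>c\<bar>" by (rule power2_le_imp_le) simp
  thus ?thesis using assms by (simp add: field_simps)
qed

lemma bad_prob:
  fixes z :: "real^'d" and q \<epsilon> :: real
  assumes q: "q > 0" and zq: "norm z * sqrt q \<ge> 1" and e: "\<epsilon> \<ge> 0" "\<epsilon> * CARD('d) * q * q \<le> 1"
  shows "emeasure (gauss_vec :: (real^'d) measure) {w. \<bar>w \<bullet> z\<bar> \<le> norm w * \<epsilon>} \<le> ennreal (2/q)"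
proof -
  define d where "d = real CARD('d)"
  have d1: "d \<ge> 1" unfolding d_def by (simp add: Suc_le_eq)
  obtain b0 where b0: "b0 \<in> Basis" and c0: "(z \<bullet> b0)\<^sup>2 * d \<ge> (norm z)\<^sup>2"
    using exists_big_coord[of z] unfolding d_def by blast
  define R2 where "R2 = d * q"
  define R where "R = sqrt R2"
  have R2p: "R2 > 0" using q d1 unfolding R2_def by simp
  have nz: "(norm z)\<^sup>2 * q \<ge> 1"
  proof -
    have "(norm z * sqrt q)\<^sup>2 \<ge> 1" using zq by (simp add: one_le_power)
    thus ?thesis using q by (simp add: power_mult_distrib)
  qed
  have c0sq: "(z \<bullet> b0)\<^sup>2 * d * q \<ge> 1" using c0 nz q
    by (smt (verit) mult_right_mono)
  hence c0nz: "z \<bullet> b0 \<noteq> 0" by auto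
  have Re: "R * \<epsilon> \<le> \<bar>z \<bullet> b0\<bar> / q"
    unfolding R_def R2_def using key_ineq[of q d \<epsilon> "z \<bullet> b0"] q d1 e c0sq unfolding d_def by simp
  have sub: "{w. \<bar>w \<bullet> z\<bar> \<le> norm w * \<epsilon>} \<subseteq> {w. (norm w)\<^sup>2 > R2} \<union> {w. \<bar>w \<bullet> z\<bar> \<le> R * \<epsilon>}"
  proof
    fix w :: "real^'d" assume w: "w \<in> {w. \<bar>w \<bullet> z\<bar> \<le> norm w * \<epsilon>}"
    show "w \<in> {w. (norm w)\<^sup>2 > R2} \<union> {w. \<bar>w \<bullet> z\<bar> \<le> R * \<epsilon>}"
    proof (cases "(norm w)\<^sup>2 > R2")
      case False
      hence "norm w \<le> R" unfolding R_def by (simp add: real_le_rsqrt)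
      hence "norm w * \<epsilon> \<le> R * \<epsilon>" using e by (simp add: mult_right_mono)
      thus ?thesis using w by auto
    qed auto
  qed
  have "emeasure (gauss_vec :: (real^'d) measure) {w. \<bar>w \<bullet> z\<bar> \<le> norm w * \<epsilon>}
      \<le> emeasure (gauss_vec :: (real^'d) measure) ({w. (norm w)\<^sup>2 > R2} \<union> {w. \<bar>w \<bullet> z\<bar> \<le> R * \<epsilon>})"
    by (rule emeasure_mono[OF sub]) measurable
  also have "\<dots> \<le> emeasure (gauss_vec :: (real^'d) measure) {w. (norm w)\<^sup>2 > R2} + emeasure (gauss_vec :: (real^'d) measure) {w. \<bar>w \<bullet> z\<bar> \<le> R * \<epsilon>}"
    by (rule emeasure_subadditive) measurable
  also have "\<dots> \<le> ennreal (CARD('d) / R2) + ennreal ((R * \<epsilon>) / \<bar>z \<bullet> b0\<bar>)"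
    using R2p e c0nz b0 unfolding R_def
    by (intro add_mono gauss_norm_tail gauss_anti) auto
  also have "\<dots> \<le> ennreal (1/q) + ennreal (1/q)"
  proof (intro add_mono ennreal_leI)
    show "real CARD('d) / R2 \<le> 1 / q" unfolding R2_def d_def using q by simp
    show "R * \<epsilon> / \<bar>z \<bullet> b0\<bar> \<le> 1 / q" using Re c0nz q
      by (simp add: divide_le_eq field_simps)
  qed
  also have "\<dots> = ennreal (2/q)" using q by (simp add: ennreal_plus[symmetric] del: ennreal_plus)
  finally show ?thesis .
qed



lemma exp_ind_ennreal: "ennreal (exp (indicator B w)) = 1 + ennreal (exp 1 - 1) * indicator B w"
proof (cases "w \<in> B")
  case True
  have "ennreal (exp 1) = ennreal (1 + (exp 1 - 1))" by simp
  also have "\<dots> = ennreal 1 + ennreal (exp 1 - 1)" by (rule ennreal_plus) auto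
  finally show ?thesis using True by simp
qed simp

lemma chernoff:
  fixes B :: "(real^'d) set" and m :: nat and pr k :: real
  assumes B[measurable]: "B \<in> sets borel" and p: "emeasure (gauss_vec::(real^'d) measure) B \<le> ennreal pr" and pr: "pr \<ge> 0"
  shows "emeasure (PiM {..<m} (\<lambda>_. gauss_vec::(real^'d) measure))
     {W \<in> space (PiM {..<m} (\<lambda>_. gauss_vec::(real^'d) measure)). k \<le> (\<Sum>j<m. indicator B (W j))}
     \<le> ennreal (exp (2 * pr * m - k))"
proof -
  let ?G = "gauss_vec::(real^'d) measure"
  let ?P = "PiM {..<m} (\<lambda>_. ?G)"
  let ?S = "{W \<in> space ?P. k \<le> (\<Sum>j<m. indicator B (W j))}"
  interpret PS: product_sigma_finite "\<lambda>_::nat. ?G"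
    unfolding product_sigma_finite_def using prob_gauss prob_space_imp_sigma_finite by blast
  have Sm: "?S \<in> sets ?P" by measurable
  have "emeasure ?P ?S = (\<integral>\<^sup>+ W. indicator ?S W \<partial>?P)" using Sm by simp
  also have "\<dots> \<le> (\<integral>\<^sup>+ W. ennreal (exp (-k)) * (\<Prod>j\<in>{..<m}. ennreal (exp (indicator B (W j)))) \<partial>?P)"
  proof (intro nn_integral_mono)
    fix W assume W: "W \<in> space ?P"
    have e: "exp (-k) * (\<Prod>j\<in>{..<m}. exp (indicator B (W j))) = exp ((\<Sum>j<m. indicator B (W j)) - k)"
      by (simp add: exp_sum exp_diff exp_minus field_simps)
    show "indicator ?S W \<le> ennreal (exp (-k)) * (\<Prod>j\<in>{..<m}. ennreal (exp (indicator B (W j))))"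
    proof (cases "W \<in> ?S")
      case True
      hence "1 \<le> exp ((\<Sum>j<m. indicator B (W j)) - k)" by simp
      hence "ennreal 1 \<le> ennreal (exp (-k) * (\<Prod>j\<in>{..<m}. exp (indicator B (W j))))"
        unfolding e by (rule ennreal_leI)
      thus ?thesis using True by (simp add: ennreal_mult prod_ennreal prod_nonneg)
    qed simp
  qed
  also have "\<dots> = ennreal (exp (-k)) * (\<integral>\<^sup>+ W. (\<Prod>j\<in>{..<m}. ennreal (exp (indicator B (W j)))) \<partial>?P)"
    by (rule nn_integral_cmult) measurable
  also have "\<dots> = ennreal (exp (-k)) * (\<Prod>j\<in>{..<m}. (\<integral>\<^sup>+ w. ennreal (exp (indicator B w)) \<partial>?G))"
    by (subst PS.product_nn_integral_prod) auto
  also have "\<dots> = ennreal (exp (-k)) * (\<integral>\<^sup>+ w. ennreal (exp (indicator B w)) \<partial>?G) ^ m"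
    by simp
  also have "\<dots> \<le> ennreal (exp (-k)) * ennreal (exp (2 * pr)) ^ m"
  proof (intro mult_left_mono power_mono)
    have "(\<integral>\<^sup>+ w. ennreal (exp (indicator B w)) \<partial>?G) = (\<integral>\<^sup>+ w. 1 + ennreal (exp 1 - 1) * indicator B w \<partial>?G)"
      by (simp only: exp_ind_ennreal)
    also have "\<dots> = 1 + ennreal (exp 1 - 1) * emeasure ?G B"
      by (subst nn_integral_add) (auto simp: nn_integral_cmult_indicator gauss_space)
    also have "\<dots> \<le> 1 + ennreal 2 * ennreal pr"
    proof (intro add_mono mult_mono)
      show "ennreal (exp 1 - 1) \<le> ennreal 2" using exp_le by (intro ennreal_leI) simp
    qed (use p in auto)
    also have "\<dots> = ennreal (1 + 2 * pr)"
    proof -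
      have "ennreal (1 + 2 * pr) = ennreal 1 + ennreal (2 * pr)" using pr by (subst ennreal_plus) auto
      also have "ennreal (2 * pr) = ennreal 2 * ennreal pr" using pr by (subst ennreal_mult) auto
      finally show ?thesis by simp
    qed
    also have "\<dots> \<le> ennreal (exp (2 * pr))"
      by (intro ennreal_leI) (metis add.commute exp_ge_add_one_self)
    finally show "(\<integral>\<^sup>+ w. ennreal (exp (indicator B w)) \<partial>?G) \<le> ennreal (exp (2 * pr))" .
  qed auto
  also have "\<dots> = ennreal (exp (2 * pr * m - k))"
  proof -
    have "ennreal (exp (2 * pr)) ^ m = ennreal (exp (2 * pr) ^ m)" by (rule ennreal_power) simp
    also have "exp (2 * pr) ^ m = exp (2 * pr * m)" by (simp add: exp_of_nat_mult[symmetric] mult.commute)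
    finally have "ennreal (exp (-k)) * ennreal (exp (2 * pr)) ^ m = ennreal (exp (-k) * exp (2 * pr * m))"
      by (simp add: ennreal_mult)
    also have "exp (-k) * exp (2 * pr * m) = exp (2 * pr * m - k)" by (simp add: exp_add[symmetric])
    finally show ?thesis .
  qed
  finally show ?thesis .
qed



lemma row_bound:
  fixes W :: "nat \<Rightarrow> real^'d" and x z :: "real^'d"
  assumes a: "\<bar>a j\<bar> \<le> 1" and xz: "norm (x - z) \<le> \<epsilon>" and rho: "\<rho> > 0" and m: "m > 0"
  shows "(norm (grad_row \<rho> m a W x j - grad_row \<rho> m a W z j))\<^sup>2
    \<le> \<rho>\<^sup>2 / m * (if \<bar>W j \<bullet> z\<bar> \<le> norm (W j) * \<epsilon> then (norm z + \<epsilon>)\<^sup>2 else \<epsilon>\<^sup>2)"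
proof -
  define w where "w = W j"
  define c where "c = \<rho> / sqrt m * a j"
  define ix :: real where "ix = (if w \<bullet> x \<ge> 0 then 1 else 0)"
  define iz :: real where "iz = (if w \<bullet> z \<ge> 0 then 1 else 0)"
  define bd where "bd = (if \<bar>w \<bullet> z\<bar> \<le> norm w * \<epsilon> then norm z + \<epsilon> else \<epsilon>)"
  have e0: "\<epsilon> \<ge> 0" using xz norm_ge_zero order_trans by blast
  have D: "grad_row \<rho> m a W x j - grad_row \<rho> m a W z j = c *\<^sub>R (ix *\<^sub>R x - iz *\<^sub>R z)"
    unfolding grad_row_def c_def ix_def iz_def w_def by (simp add: scaleR_diff_right)
  have wxz: "\<bar>w \<bullet> (x - z)\<bar> \<le> norm w * \<epsilon>"
    using Cauchy_Schwarz_ineq2[of w "x - z"] xz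
    by (meson mult_left_mono norm_ge_zero order_trans)
  have nx: "norm x \<le> norm z + \<epsilon>" using xz norm_triangle_sub[of x z] by simp
  have n: "norm (ix *\<^sub>R x - iz *\<^sub>R z) \<le> bd"
  proof (cases "w \<bullet> x \<ge> 0"; cases "w \<bullet> z \<ge> 0")
    assume "w \<bullet> x \<ge> 0" "w \<bullet> z \<ge> 0"
    moreover have "norm (x - z) \<le> norm z + \<epsilon>" using xz norm_ge_zero[of z] by linarith
    ultimately show ?thesis unfolding ix_def iz_def bd_def using xz by auto
  next
    assume "\<not> w \<bullet> x \<ge> 0" "\<not> w \<bullet> z \<ge> 0"
    thus ?thesis unfolding ix_def iz_def bd_def using e0 by auto
  next
    assume h: "w \<bullet> x \<ge> 0" "\<not> w \<bullet> z \<ge> 0"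
    hence "\<bar>w \<bullet> z\<bar> \<le> \<bar>w \<bullet> (x - z)\<bar>" by (simp add: inner_diff_right)
    hence "\<bar>w \<bullet> z\<bar> \<le> norm w * \<epsilon>" using wxz by linarith
    thus ?thesis unfolding ix_def iz_def bd_def using h nx by auto
  next
    assume h: "\<not> w \<bullet> x \<ge> 0" "w \<bullet> z \<ge> 0"
    hence "\<bar>w \<bullet> z\<bar> \<le> \<bar>w \<bullet> (x - z)\<bar>" by (simp add: inner_diff_right)
    hence "\<bar>w \<bullet> z\<bar> \<le> norm w * \<epsilon>" using wxz by linarith
    thus ?thesis unfolding ix_def iz_def bd_def using h e0 by auto
  qed
  have c: "\<bar>c\<bar> \<le> \<rho> / sqrt m"
  proof -
    have "\<rho> * \<bar>a j\<bar> \<le> \<rho>" using a rho by (simp add: mult_left_le)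
    thus ?thesis unfolding c_def using rho m by (simp add: abs_mult divide_right_mono)
  qed
  have "norm (grad_row \<rho> m a W x j - grad_row \<rho> m a W z j) \<le> \<rho> / sqrt m * bd"
  proof -
    have "\<bar>c\<bar> * norm (ix *\<^sub>R x - iz *\<^sub>R z) \<le> \<rho> / sqrt m * bd"
      using c n rho by (intro mult_mono) auto
    thus ?thesis unfolding D by simp
  qed
  hence "(norm (grad_row \<rho> m a W x j - grad_row \<rho> m a W z j))\<^sup>2 \<le> (\<rho> / sqrt m * bd)\<^sup>2"
    by (intro power_mono) auto
  also have "\<dots> = \<rho>\<^sup>2 / m * bd\<^sup>2" using m by (simp add: power_mult_distrib power_divide)
  finally show ?thesis unfolding bd_def w_def by (auto split: if_splits)
qed



lemma sum_bound:
  fixes W :: "nat \<Rightarrow> real^'d" and x z :: "real^'d"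
  assumes a: "\<forall>j<m. \<bar>a j\<bar> \<le> 1" and xz: "norm (x - z) \<le> \<epsilon>" and rho: "\<rho> > 0" and m: "m > 0"
  shows "grad_diff_sq \<rho> m a W x z \<le> \<rho>\<^sup>2 / m *
    ((\<Sum>j<m. indicator {w. \<bar>w \<bullet> z\<bar> \<le> norm w * \<epsilon>} (W j)) * (norm z + \<epsilon>)\<^sup>2 + m * \<epsilon>\<^sup>2)"
    and "grad_diff_sq \<rho> m a W x z \<le> \<rho>\<^sup>2 * (norm z + \<epsilon>)\<^sup>2"
proof -
  let ?B = "{w::real^'d. \<bar>w \<bullet> z\<bar> \<le> norm w * \<epsilon>}"
  have e0: "\<epsilon> \<ge> 0" using xz norm_ge_zero order_trans by blast
  have ee: "\<epsilon>\<^sup>2 \<le> (norm z + \<epsilon>)\<^sup>2" using e0 by (intro power_mono) auto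
  have "grad_diff_sq \<rho> m a W x z \<le> (\<Sum>j<m. \<rho>\<^sup>2 / m * (if \<bar>W j \<bullet> z\<bar> \<le> norm (W j) * \<epsilon> then (norm z + \<epsilon>)\<^sup>2 else \<epsilon>\<^sup>2))"
    unfolding grad_diff_sq_def using a xz rho m by (intro sum_mono row_bound) auto
  also have "\<dots> = \<rho>\<^sup>2 / m * (\<Sum>j<m. (if \<bar>W j \<bullet> z\<bar> \<le> norm (W j) * \<epsilon> then (norm z + \<epsilon>)\<^sup>2 else \<epsilon>\<^sup>2))"
    by (simp add: sum_distrib_left)
  finally have main: "grad_diff_sq \<rho> m a W x z \<le> \<rho>\<^sup>2 / m * (\<Sum>j<m. (if \<bar>W j \<bullet> z\<bar> \<le> norm (W j) * \<epsilon> then (norm z + \<epsilon>)\<^sup>2 else \<epsilon>\<^sup>2))" .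
  have c: "\<rho>\<^sup>2 / m \<ge> 0" by simp
  have "(\<Sum>j<m. (if \<bar>W j \<bullet> z\<bar> \<le> norm (W j) * \<epsilon> then (norm z + \<epsilon>)\<^sup>2 else \<epsilon>\<^sup>2))
      \<le> (\<Sum>j<m. indicator ?B (W j) * (norm z + \<epsilon>)\<^sup>2 + \<epsilon>\<^sup>2)"
    by (intro sum_mono) (auto split: split_indicator)
  also have "\<dots> = (\<Sum>j<m. indicator ?B (W j)) * (norm z + \<epsilon>)\<^sup>2 + m * \<epsilon>\<^sup>2"
    by (simp add: sum.distrib sum_distrib_right)
  finally show "grad_diff_sq \<rho> m a W x z \<le> \<rho>\<^sup>2 / m *
    ((\<Sum>j<m. indicator ?B (W j)) * (norm z + \<epsilon>)\<^sup>2 + m * \<epsilon>\<^sup>2)"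
    using main c by (meson mult_left_mono order_trans)
  have "(\<Sum>j<m. (if \<bar>W j \<bullet> z\<bar> \<le> norm (W j) * \<epsilon> then (norm z + \<epsilon>)\<^sup>2 else \<epsilon>\<^sup>2))
      \<le> (\<Sum>j<m. (norm z + \<epsilon>)\<^sup>2)"
    using ee by (intro sum_mono) auto
  also have "\<dots> = m * (norm z + \<epsilon>)\<^sup>2" by simp
  finally have "grad_diff_sq \<rho> m a W x z \<le> \<rho>\<^sup>2 / m * (m * (norm z + \<epsilon>)\<^sup>2)"
    using main c by (meson mult_left_mono order_trans)
  thus "grad_diff_sq \<rho> m a W x z \<le> \<rho>\<^sup>2 * (norm z + \<epsilon>)\<^sup>2" using m by simp
qed

lemma final_meas:
  fixes m :: nat and E :: "(nat \<Rightarrow> real^'d) set" and Q :: "(nat \<Rightarrow> real^'d) \<Rightarrow> (nat \<Rightarrow> real) \<Rightarrow> bool"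
  assumes E: "E \<in> sets (PiM {..<m} (\<lambda>_. gauss_vec::(real^'d) measure))"
    and mE: "measure (PiM {..<m} (\<lambda>_. gauss_vec::(real^'d) measure)) E \<ge> 1 - \<delta>"
    and Q: "\<And>W a. W \<in> E \<Longrightarrow> (\<forall>j<m. \<bar>a j\<bar> \<le> 1) \<Longrightarrow> Q W a"
  shows "\<exists>A \<in> sets (init_measure m :: ((nat \<Rightarrow> real^'d) \<times> (nat \<Rightarrow> real)) measure).
           measure (init_measure m) A \<ge> 1 - \<delta> \<and> (\<forall>(W, a) \<in> A. Q W a)"
proof -
  let ?PW = "PiM {..<m} (\<lambda>_. gauss_vec::(real^'d) measure)"
  let ?PA = "PiM {..<m} (\<lambda>_. sign_measure)"
  let ?Aa = "PiE {..<m} (\<lambda>_. {-1, 1::real})"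
  interpret PW: prob_space ?PW by (rule prob_space_PiM) (rule prob_gauss)
  have psign: "prob_space sign_measure" unfolding sign_measure_def by (rule prob_space_measure_pmf)
  interpret PA: prob_space ?PA by (rule prob_space_PiM) (rule psign)
  interpret PSA: product_sigma_finite "\<lambda>_::nat. sign_measure"
    unfolding product_sigma_finite_def using psign prob_space_imp_sigma_finite by blast
  have Aa: "?Aa \<in> sets ?PA"
    by (rule sets_PiM_I_finite) (auto simp: sign_measure_def)
  have eAa: "emeasure ?PA ?Aa = 1"
  proof -
    have "emeasure ?PA ?Aa = (\<Prod>i<m. emeasure sign_measure {-1, 1})"
      by (rule PSA.emeasure_PiM) (auto simp: sign_measure_def)
    also have "emeasure sign_measure {-1, 1::real} = 1"
      unfolding sign_measure_def by (subst emeasure_pmf_of_set) auto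
    finally show ?thesis by simp
  qed
  have eA: "emeasure (init_measure m) (E \<times> ?Aa) = emeasure ?PW E"
    unfolding init_measure_def using E Aa eAa
    by (subst PA.emeasure_pair_measure_Times) auto
  interpret PP: prob_space "init_measure m :: ((nat \<Rightarrow> real^'d) \<times> (nat \<Rightarrow> real)) measure"
    unfolding init_measure_def by (intro prob_space_pair) (unfold_locales)
  show ?thesis
  proof (intro bexI conjI)
    show "E \<times> ?Aa \<in> sets (init_measure m :: ((nat \<Rightarrow> real^'d) \<times> (nat \<Rightarrow> real)) measure)"
      unfolding init_measure_def using E Aa by simp
    show "measure (init_measure m) (E \<times> ?Aa) \<ge> 1 - \<delta>"
      using eA mE by (simp add: PP.emeasure_eq_measure PW.emeasure_eq_measure)
    show "\<forall>(W, a) \<in> E \<times> ?Aa. Q W a"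
    proof (clarify)
      fix W a assume h: "W \<in> E" "a \<in> ?Aa"
      hence "\<forall>j<m. \<bar>a j\<bar> \<le> 1" unfolding PiE_iff by force
      thus "Q W a" using Q h by blast
    qed
  qed
qed



lemma sqrt_le_self': "x \<ge> 1 \<Longrightarrow> sqrt x \<le> (x::real)"
proof -
  assume x: "x \<ge> 1"
  have "x * 1 \<le> x * x" using x by (intro mult_left_mono) auto
  hence "sqrt x \<le> sqrt (x * x)" by (intro real_sqrt_le_mono) simp
  thus ?thesis using x by simp
qed

lemma num_small_z:
  fixes nz \<epsilon> L :: real and m :: nat
  assumes m: "m > 0" and nz: "0 \<le> nz" "nz * sqrt (sqrt m) < 1" and e: "0 \<le> \<epsilon>" "\<epsilon> \<le> 1 / m" and L: "L \<ge> 1"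
  shows "(nz + \<epsilon>)\<^sup>2 \<le> 113 * sqrt (L / m)"
proof -
  define q where "q = sqrt (sqrt m)"
  have m1: "real m \<ge> 1" using m by simp
  have q1: "q \<ge> 1" unfolding q_def using m1 by simp
  have qm: "q \<le> m"
  proof -
    have s1: "sqrt m \<ge> 1" using m1 by simp
    have "q \<le> sqrt m" unfolding q_def by (rule sqrt_le_self'[OF s1])
    also have "\<dots> \<le> m" by (rule sqrt_le_self'[OF m1])
    finally show ?thesis .
  qed
  have qq: "q * q = sqrt m" unfolding q_def using m1 by simp
  have "nz < 1 / q" using nz q1 unfolding q_def by (simp add: field_simps)
  moreover have "1 / m \<le> 1 / q" using qm q1 by (intro divide_left_mono) auto
  hence "\<epsilon> \<le> 1 / q" using e by linarith
  ultimately have "nz + \<epsilon> \<le> 2 / q" by simp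
  hence "(nz + \<epsilon>)\<^sup>2 \<le> (2 / q)\<^sup>2" using nz e by (intro power_mono) auto
  also have "\<dots> = 4 / sqrt m" using qq by (simp add: power2_eq_square)
  also have "\<dots> \<le> 113 / sqrt m" using m1 by (simp add: divide_right_mono)
  also have "\<dots> = 113 * sqrt (1 / m)" by (simp add: real_sqrt_divide)
  also have "\<dots> \<le> 113 * sqrt (L / m)" using L m1 by (simp add: divide_right_mono)
  finally show ?thesis .
qed

lemma num_trivial:
  fixes nz \<epsilon> :: real
  assumes "0 \<le> nz" "nz \<le> 1" "0 \<le> \<epsilon>" "\<epsilon> \<le> 1" "4 \<le> X"
  shows "(nz + \<epsilon>)\<^sup>2 \<le> X"
proof -
  have "(nz + \<epsilon>)\<^sup>2 \<le> 2\<^sup>2" using assms by (intro power_mono) auto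
  thus ?thesis using assms by simp
qed

lemma num_exp:
  fixes L \<delta> :: real and m :: nat
  assumes m: "m > 0" and L: "L \<ge> 1" "L \<ge> ln (1/\<delta>)" and d: "0 < \<delta>" and small: "113 * sqrt (L / m) < 4"
  shows "exp (2 * (2 / sqrt m) * m - 28 * sqrt (m * L)) \<le> \<delta>"
proof -
  have m1: "real m \<ge> 1" using m by simp
  have "sqrt (L / m) < 1" using small by linarith
  hence "sqrt (L / m) < sqrt 1" by simp
  hence "L / m < 1" by (simp only: real_sqrt_less_iff)
  hence Lm: "L < m" using m1 by (simp add: field_simps)
  define s where "s = sqrt (m * L)"
  have sL: "s \<ge> L"
  proof -
    have "L * L \<le> m * L" using Lm L by (intro mult_right_mono) auto
    thus ?thesis unfolding s_def using L by (simp add: real_le_rsqrt power2_eq_square)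
  qed
  have "real m * 1 \<le> m * L" using L m1 by (intro mult_left_mono) auto
  hence sm: "sqrt m \<le> s" unfolding s_def by (intro real_sqrt_le_mono) simp
  have "2 * (2 / sqrt m) * m = 4 * sqrt m"
  proof -
    have "sqrt m * sqrt m = m" using m1 by simp
    thus ?thesis using m1 by (simp add: field_simps)
  qed
  hence "2 * (2 / sqrt m) * m - 28 * s \<le> - L" using sL sm L by linarith
  also have "- L \<le> ln \<delta>" using L d by (simp add: ln_div)
  finally have "exp (2 * (2 / sqrt m) * m - 28 * s) \<le> exp (ln \<delta>)" by simp
  thus ?thesis unfolding s_def using d by simp
qed

lemma num_main:
  fixes N nz \<epsilon> L \<rho> :: real and m :: nat
  assumes m: "m > 0" and N: "0 \<le> N" "N < 28 * sqrt (m * L)" and L: "L \<ge> 1"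
    and nz: "0 \<le> nz" "nz \<le> 1" and e: "0 \<le> \<epsilon>" "\<epsilon> \<le> 1 / m"
  shows "\<rho>\<^sup>2 / m * (N * (nz + \<epsilon>)\<^sup>2 + m * \<epsilon>\<^sup>2) \<le> 113 * \<rho>\<^sup>2 * sqrt (L / m)"
proof -
  have m1: "real m \<ge> 1" using m by simp
  define s where "s = sqrt (m * L)"
  have "1 * 1 \<le> real m * L" using m1 L by (intro mult_mono) auto
  hence s1: "s \<ge> 1" unfolding s_def by simp
  have "1 / real m \<le> 1" using m1 by simp
  hence e1: "\<epsilon> \<le> 1" using e by linarith
  have a: "(nz + \<epsilon>)\<^sup>2 \<le> 4" using num_trivial[of nz \<epsilon> 4] nz e e1 by simp
  have b: "N * (nz + \<epsilon>)\<^sup>2 \<le> (28 * s) * 4" using N a L m1 unfolding s_def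
    by (intro mult_mono) auto
  have c: "m * \<epsilon>\<^sup>2 \<le> 1"
  proof -
    have "m * \<epsilon> \<le> 1" using e m1 by (simp add: field_simps)
    moreover have "\<epsilon> \<le> 1" by (rule e1)
    ultimately have "(m * \<epsilon>) * \<epsilon> \<le> 1 * 1" using e m1 by (intro mult_mono) auto
    thus ?thesis by (simp add: power2_eq_square mult.assoc)
  qed
  have "N * (nz + \<epsilon>)\<^sup>2 + m * \<epsilon>\<^sup>2 \<le> 113 * s" using b c s1 by linarith
  hence "\<rho>\<^sup>2 / m * (N * (nz + \<epsilon>)\<^sup>2 + m * \<epsilon>\<^sup>2) \<le> \<rho>\<^sup>2 / m * (113 * s)"
    by (intro mult_left_mono) auto
  also have "\<rho>\<^sup>2 / m * (113 * s) = 113 * \<rho>\<^sup>2 * (s / m)" by simp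
  also have "s / m = sqrt (L / m)"
  proof -
    have "sqrt (L / m) = sqrt ((m * L) / (m * m))"
      by (rule arg_cong[where f=sqrt]) (use m1 in \<open>simp add: field_simps\<close>)
    also have "\<dots> = sqrt (m * L) / sqrt (m * m)" by (rule real_sqrt_divide)
    also have "\<dots> = s / m" unfolding s_def by simp
    finally show ?thesis by simp
  qed
  finally show ?thesis .
qed


theorem lemmaA5:
  fixes z :: "real ^ 'd" and m :: nat and \<rho> \<epsilon> \<delta> :: real
  assumes "\<rho> > 0" and "m > 0"
    and "m \<ge> ln (exp 1 * CARD('d) * m)"
    and "norm z \<le> 1"
    and "\<epsilon> > 0" and "\<epsilon> \<le> 1 / (CARD('d) * m)"
    and "0 < \<delta>" and "\<delta> < 1"
  shows "\<exists>A \<in> sets (init_measure m).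
           measure (init_measure m) A \<ge> 1 - \<delta> \<and>
           (\<forall>(W, a) \<in> A. \<forall>x :: real ^ 'd. norm (x - z) \<le> \<epsilon> \<and> norm x \<le> 1 \<longrightarrow>
              grad_diff_sq \<rho> m a W x z \<le> 113 * \<rho>\<^sup>2 * sqrt (ln (exp 1 * CARD('d) * m / \<delta>) / m))"
proof -
  note rho = assms(1) and m = assms(2) and nz1 = assms(4) and e0 = assms(5) and e1 = assms(6)
    and d0 = assms(7) and d1 = assms(8)
  define L where "L = ln (exp 1 * CARD('d) * m / \<delta>)"
  define B where "B = {w::real^'d. \<bar>w \<bullet> z\<bar> \<le> norm w * \<epsilon>}"
  let ?PW = "PiM {..<m} (\<lambda>_. gauss_vec::(real^'d) measure)"
  let ?Q = "\<lambda>W a. \<forall>x :: real ^ 'd. norm (x - z) \<le> \<epsilon> \<and> norm x \<le> 1 \<longrightarrow>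
              grad_diff_sq \<rho> m a W x z \<le> 113 * \<rho>\<^sup>2 * sqrt (L / m)"
  interpret PW: prob_space ?PW by (rule prob_space_PiM) (rule prob_gauss)
  have m1: "real m \<ge> 1" using m by simp
  have dpos: "real CARD('d) \<ge> 1" by (simp add: Suc_le_eq)
  have dm1: "real CARD('d) * m \<ge> 1" using m1 dpos by (metis mult_mono' mult_1 zero_le_one)
  have Ldef: "L = 1 + ln (real CARD('d) * m) + ln (1 / \<delta>)"
  proof -
    have "L = ln (exp 1 * ((real CARD('d) * real m) * (1 / \<delta>)))" unfolding L_def
      by (rule arg_cong[where f=ln]) simp
    also have "\<dots> = ln (exp 1) + ln ((real CARD('d) * m) * (1 / \<delta>))"
      using dm1 d0 m by (subst ln_mult) auto
    also have "ln ((real CARD('d) * m) * (1 / \<delta>)) = ln (real CARD('d) * m) + ln (1 / \<delta>)"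
      using dm1 d0 m by (subst ln_mult) auto
    finally show ?thesis by simp
  qed
  have lnd: "ln (1 / \<delta>) \<ge> 0" using d0 d1 by simp
  have lndm: "ln (real CARD('d) * m) \<ge> 0" using dm1 by simp
  have L1: "L \<ge> 1" using Ldef lnd lndm by linarith
  have L2: "L \<ge> ln (1 / \<delta>)" using Ldef lndm by linarith
  have em: "\<epsilon> \<le> 1 / m"
  proof -
    have "1 / (real CARD('d) * m) \<le> 1 / m" using dpos m1 by (intro divide_left_mono) auto
    thus ?thesis using e1 by simp
  qed
  have eone: "\<epsilon> \<le> 1" using em m1 by (meson order_trans divide_le_eq_1_pos zero_less_one less_le_trans order_refl)
  have nz0: "norm z \<ge> 0" by simp
  have Qsuff: "?Q W a" if "\<forall>j<m. \<bar>a j\<bar> \<le> 1" "(norm z + \<epsilon>)\<^sup>2 \<le> 113 * sqrt (L / m)" for W a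
  proof (intro allI impI)
    fix x :: "real^'d" assume x: "norm (x - z) \<le> \<epsilon> \<and> norm x \<le> 1"
    have "grad_diff_sq \<rho> m a W x z \<le> \<rho>\<^sup>2 * (norm z + \<epsilon>)\<^sup>2"
      using sum_bound(2)[OF that(1) _ rho m] x by blast
    also have "\<dots> \<le> \<rho>\<^sup>2 * (113 * sqrt (L / m))" using that(2) by (intro mult_left_mono) auto
    finally show "grad_diff_sq \<rho> m a W x z \<le> 113 * \<rho>\<^sup>2 * sqrt (L / m)" by simp
  qed
  have "\<exists>A \<in> sets (init_measure m :: ((nat \<Rightarrow> real^'d) \<times> (nat \<Rightarrow> real)) measure).
           measure (init_measure m) A \<ge> 1 - \<delta> \<and> (\<forall>(W, a) \<in> A. ?Q W a)"
  proof (cases "4 \<le> 113 * sqrt (L / m) \<or> norm z * sqrt (sqrt m) < 1")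
    case True
    have b: "(norm z + \<epsilon>)\<^sup>2 \<le> 113 * sqrt (L / m)"
    proof (cases "4 \<le> 113 * sqrt (L / m)")
      case True thus ?thesis using num_trivial[of "norm z" \<epsilon>] nz1 e0 eone by simp
    next
      case False
      hence "norm z * sqrt (sqrt m) < 1" using \<open>4 \<le> 113 * sqrt (L / m) \<or> norm z * sqrt (sqrt m) < 1\<close> by blast
      thus ?thesis using num_small_z[OF m nz0 _ _ em L1] e0 by simp
    qed
    show ?thesis
    proof (rule final_meas[where E = "space ?PW"])
      show "space ?PW \<in> sets ?PW" by simp
      show "measure ?PW (space ?PW) \<ge> 1 - \<delta>" using d0 by (simp add: PW.prob_space)
      show "?Q W a" if "W \<in> space ?PW" "\<forall>j<m. \<bar>a j\<bar> \<le> 1" for W a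
        using Qsuff[OF that(2) b] .
    qed
  next
    case False
    hence small: "113 * sqrt (L / m) < 4" and zbig: "norm z * sqrt (sqrt m) \<ge> 1" by auto
    define k where "k = 28 * sqrt (m * L)"
    define S where "S = {W \<in> space ?PW. k \<le> (\<Sum>j<m. indicator B (W j))}"
    have Bm[measurable]: "B \<in> sets borel" unfolding B_def by measurable
    have Sm: "S \<in> sets ?PW" unfolding S_def by measurable
    have sqm: "sqrt m > 0" using m1 by simp
    have pB: "emeasure (gauss_vec :: (real^'d) measure) B \<le> ennreal (2 / sqrt m)"
      unfolding B_def
    proof (rule bad_prob)
      show "\<epsilon> * real CARD('d) * sqrt m * sqrt m \<le> 1"
      proof -
        have "\<epsilon> * real CARD('d) * sqrt m * sqrt m = \<epsilon> * (real CARD('d) * m)" using m1 by simp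
        also have "\<dots> \<le> 1 / (CARD('d) * m) * (real CARD('d) * m)" using e1 dm1 by (intro mult_right_mono) auto
        also have "\<dots> = 1" using dm1 m by simp
        finally show ?thesis .
      qed
    qed (use sqm zbig e0 in auto)
    have "emeasure ?PW S \<le> ennreal (exp (2 * (2 / sqrt m) * m - k))"
      unfolding S_def by (rule chernoff[OF Bm pB]) (use sqm in simp)
    also have "\<dots> \<le> ennreal \<delta>"
      using num_exp[OF m L1 L2 d0 small] unfolding k_def by (intro ennreal_leI)
    finally have mS: "measure ?PW S \<le> \<delta>" using d0 by (simp add: PW.emeasure_eq_measure)
    show ?thesis
    proof (rule final_meas[where E = "space ?PW - S"])
      show "space ?PW - S \<in> sets ?PW" using Sm by auto
      show "measure ?PW (space ?PW - S) \<ge> 1 - \<delta>" using mS Sm by (simp add: PW.prob_compl)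
      show "?Q W a" if W: "W \<in> space ?PW - S" and a: "\<forall>j<m. \<bar>a j\<bar> \<le> 1" for W a
      proof (intro allI impI)
        fix x :: "real^'d" assume x: "norm (x - z) \<le> \<epsilon> \<and> norm x \<le> 1"
        define N where "N = (\<Sum>j<m. indicator B (W j) :: real)"
        have N0: "N \<ge> 0" unfolding N_def by (simp add: sum_nonneg)
        have Nk: "N < k" using W unfolding S_def N_def by auto
        have "grad_diff_sq \<rho> m a W x z \<le> \<rho>\<^sup>2 / m * (N * (norm z + \<epsilon>)\<^sup>2 + m * \<epsilon>\<^sup>2)"
          using sum_bound(1)[OF a _ rho m] x unfolding N_def B_def by blast
        also have "\<dots> \<le> 113 * \<rho>\<^sup>2 * sqrt (L / m)"
          using num_main[OF m N0 _ L1 nz0 nz1 _ em] Nk e0 unfolding k_def by simp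
        finally show "grad_diff_sq \<rho> m a W x z \<le> 113 * \<rho>\<^sup>2 * sqrt (L / m)" .
      qed
    qed
  qed
  thus ?thesis unfolding L_def .
qed


end
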